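(* Let $n\ge 2$ and consider the ladder system, i.e. the vector field $X_f=\sum_{i=1}^n x_i\big(\sum_{j=1}^n (1+i-j)\,x_j\big)\frac{\partial}{\partial x_i}$ on $\mathbf{C}^n$. Then for every $l,m\in\{1,\dots,n\}$ the vector field $$Y^l_m = x_m\, u^{\,l-m-1}\Big(D - u\,\frac{\partial}{\partial x_l}\Big)$$ is a Lie symmetry of the ladder system, i.e. $[X_f, Y^l_m]=0$ (on the open set $\{u\neq 0\}$, where the coefficients are defined).
   Context: Coordinates $x=(x_1,\dots,x_n)\in\mathbf{C}^n$. The $n$-dimensional homogeneous Lotka–Volterra (HLV) system with coefficients $a_{ij}\in\mathbf{C}$ is $\dot x_i = x_i\sum_{j=1}^n a_{ij}x_j$, $i=1,\dots,n$, identified with the vector field $X_f=\sum_i x_i\big(\sum_j a_{ij}x_j\big)\partial/\partial x_i$. The ladder system is the HLV system with $a_{ij}=1+i-j$ (matrix with first row $1,0,\dots,-n+2$ and last row $n,n-1,\dots,1$). Notation: $u=\sum_{j=1}^n x_j$ and $D=\sum_{j=1}^n x_j\,\partial/\partial x_j$. A vector field $X$ is a Lie symmetry of the system if $[X_f,X]=X_fX-XX_f=0$. *)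

theory Defs
  imports "HOL-Analysis.Analysis"
begin

text \<open>Points of C^n are functions nat => complex; only coordinates 1..n matter.
  A vector field is a map from points to coefficient functions (coordinate i gives
  the coefficient of d/dx_i).\<close>

type_synonym vfield = "(nat \<Rightarrow> complex) \<Rightarrow> nat \<Rightarrow> complex"

definition pdiff :: "((nat \<Rightarrow> complex) \<Rightarrow> complex) \<Rightarrow> nat \<Rightarrow> (nat \<Rightarrow> complex) \<Rightarrow> complex" where
  "pdiff F k x = deriv (\<lambda>t. F (x(k := t))) (x k)"

definition lie_bracket :: "nat \<Rightarrow> vfield \<Rightarrow> vfield \<Rightarrow> vfield" where
  "lie_bracket n X Y x i =
     (\<Sum>k=1..n. X x k * pdiff (\<lambda>y. Y y i) k x - Y x k * pdiff (\<lambda>y. X y i) k x)"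

definition hlv :: "nat \<Rightarrow> (nat \<Rightarrow> nat \<Rightarrow> complex) \<Rightarrow> vfield" where
  "hlv n a x i = x i * (\<Sum>j=1..n. a i j * x j)"

definition ladder_coeff :: "nat \<Rightarrow> nat \<Rightarrow> complex" where
  "ladder_coeff i j = of_int (1 + int i - int j)"

definition usum :: "nat \<Rightarrow> (nat \<Rightarrow> complex) \<Rightarrow> complex" where
  "usum n x = (\<Sum>j=1..n. x j)"

text \<open>Y^l_m = x_m u^(l-m-1) (D - u d/dx_l), D = sum x_j d/dx_j.\<close>
definition Ysym :: "nat \<Rightarrow> nat \<Rightarrow> nat \<Rightarrow> vfield" where
  "Ysym n l m x i = x m * (usum n x) powi (int l - int m - 1) *
       (x i - (if i = l then usum n x else 0))"

end

theory Submission
  imports Defs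
begin

lemma upd_eq: "(x(k:=t)) j = x j + (if j = k then 1 else 0) * (t - x k)" for x :: "nat \<Rightarrow> complex"
  by auto

lemma usum_upd: "k \<in> {1..n} \<Longrightarrow> usum n (x(k:=t)) = usum n x + (t - x k)"
proof -
  assume k: "k \<in> {1..n}"
  have "usum n (x(k:=t)) = (\<Sum>j\<in>{1..n}. x j + (if j = k then t - x k else 0))"
    unfolding usum_def by (rule sum.cong) auto
  also have "\<dots> = usum n x + (t - x k)"
    using k by (simp add: sum.distrib usum_def)
  finally show ?thesis by simp
qed

lemma pdiff_X:
  assumes k: "k \<in> {1..n}"
  shows "pdiff (\<lambda>y. hlv n a y i) k x =
     (if i = k then (\<Sum>j=1..n. a i j * x j) else 0) + x i * a i k"
proof -
  define g where "g = (\<lambda>t. (x i + (if i = k then 1 else 0) * (t - x k)) *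
       (\<Sum>j=1..n. a i j * (x j + (if j = k then 1 else 0) * (t - x k))))"
  have D: "(g has_field_derivative
     (if i = k then 1 else 0) * (\<Sum>j=1..n. a i j * (x j + (if j = k then 1 else 0) * (x k - x k))) +
     (\<Sum>j=1..n. a i j * ((if j = k then 1 else 0) * 1)) * (x i + (if i = k then 1 else 0) * (x k - x k))) (at (x k))"
    unfolding g_def by (intro derivative_eq_intros) auto
  have s: "(\<Sum>j=1..n. a i j * ((if j = k then 1 else 0) * 1)) = a i k"
  proof -
    have "(\<Sum>j=1..n. a i j * ((if j = k then 1 else 0) * 1)) = (\<Sum>j=1..n. if j = k then a i j else 0)"
      by (rule sum.cong) auto
    then show ?thesis using k by simp
  qed
  have feq: "(\<lambda>t. hlv n a (x(k:=t)) i) = g"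
    unfolding g_def hlv_def upd_eq ..
  have "pdiff (\<lambda>y. hlv n a y i) k x = deriv g (x k)"
    unfolding pdiff_def feq ..
  also have "\<dots> = (if i = k then 1 else 0) * (\<Sum>j=1..n. a i j * (x j + (if j = k then 1 else 0) * (x k - x k))) +
     (\<Sum>j=1..n. a i j * ((if j = k then 1 else 0) * 1)) * (x i + (if i = k then 1 else 0) * (x k - x k))"
    by (rule DERIV_imp_deriv[OF D])
  also have "\<dots> = (if i = k then (\<Sum>j=1..n. a i j * x j) else 0) + x i * a i k"
    unfolding s by simp
  finally show ?thesis .
qed

lemma pdiff_Y:
  assumes k: "k \<in> {1..n}" and u: "usum n x \<noteq> 0"
  shows "pdiff (\<lambda>y. Ysym n l m y i) k x =
     (if m = k then 1 else 0) * usum n x powi (int l - int m - 1) * (x i - (if i = l then usum n x else 0))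
   + x m * (of_int (int l - int m - 1) * usum n x powi (int l - int m - 1 - 1))
       * (x i - (if i = l then usum n x else 0))
   + x m * usum n x powi (int l - int m - 1) * ((if i = k then 1 else 0) - (if i = l then 1 else 0))"
proof -
  define U where "U = usum n x"
  define p where "p = int l - int m - 1"
  have "((\<lambda>t. (x m + (if m = k then 1 else 0) * (t - x k)) * (U + (t - x k)) powi p *
      ((x i + (if i = k then 1 else 0) * (t - x k)) - (if i = l then 1 else 0) * (U + (t - x k))))
     has_field_derivative
     (((if m = k then 1 else 0) * 1) * (U + (x k - x k)) powi p
     + (of_int p * (U + (x k - x k)) powi (p - 1) * (0 + (1 - 0))) * (x m + (if m = k then 1 else 0) * (x k - x k)))
       * ((x i + (if i = k then 1 else 0) * (x k - x k)) - (if i = l then 1 else 0) * (U + (x k - x k)))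
   + ((if i = k then 1 else 0) * 1 - (if i = l then 1 else 0) * (0 + (1 - 0))) *
      ((x m + (if m = k then 1 else 0) * (x k - x k)) * (U + (x k - x k)) powi p)) (at (x k))"
    using u unfolding U_def
    by (intro derivative_eq_intros) auto
  moreover have "(\<lambda>t. Ysym n l m (x(k:=t)) i) = (\<lambda>t. (x m + (if m = k then 1 else 0) * (t - x k)) * (U + (t - x k)) powi p *
      ((x i + (if i = k then 1 else 0) * (t - x k)) - (if i = l then 1 else 0) * (U + (t - x k))))"
    unfolding Ysym_def U_def p_def usum_upd[OF k] upd_eq by (auto simp: fun_eq_iff)
  ultimately show ?thesis
    unfolding pdiff_def U_def p_def by (intro DERIV_imp_deriv) (auto simp: algebra_simps)
qed

lemma ladder_L: "(\<Sum>j'=1..n. ladder_coeff j j' * x j') =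
   (1 + of_nat j) * usum n x - (\<Sum>j'=1..n. of_nat j' * x j')"
proof -
  have "(\<Sum>j'=1..n. ladder_coeff j j' * x j') = (\<Sum>j'=1..n. (1 + of_nat j) * x j' - of_nat j' * x j')"
    by (rule sum.cong) (auto simp: ladder_coeff_def algebra_simps)
  then show ?thesis by (simp add: sum_subtractf sum_distrib_left usum_def)
qed

lemma sum_X: "(\<Sum>k=1..n. hlv n ladder_coeff x k) = (usum n x)^2"
proof -
  define u where "u = usum n x"
  define S where "S = (\<Sum>j'=1..n. of_nat j' * x j')"
  have "(\<Sum>k=1..n. hlv n ladder_coeff x k) = (\<Sum>k=1..n. x k * u + (of_nat k * x k) * u - x k * S)"
    unfolding hlv_def ladder_L by (rule sum.cong) (auto simp: u_def S_def algebra_simps)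
  also have "\<dots> = u * u + S * u - u * S"
    by (simp add: sum_subtractf sum.distrib sum_distrib_right[symmetric] u_def S_def usum_def)
  finally show ?thesis by (simp add: u_def power2_eq_square)
qed

lemma sum_e: "l \<in> {1..n} \<Longrightarrow> (\<Sum>k=1..n. x k - (if k = l then usum n x else 0)) = 0"
  by (simp add: sum_subtractf usum_def)

lemma sum_ke: "l \<in> {1..n} \<Longrightarrow> (\<Sum>k=1..n. of_nat k * (x k - (if k = l then usum n x else 0))) =
   (\<Sum>j'=1..n. of_nat j' * x j') - of_nat l * usum n x"
proof -
  assume l: "l \<in> {1..n}"
  have "(\<Sum>k=1..n. of_nat k * (x k - (if k = l then usum n x else 0))) =
     (\<Sum>k=1..n. of_nat k * x k - (if k = l then of_nat l * usum n x else 0))"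
    by (rule sum.cong) (auto simp: algebra_simps)
  then show ?thesis using l by (simp add: sum_subtractf)
qed

theorem theorem1:
  fixes n l m :: nat and x :: "nat \<Rightarrow> complex" and i :: nat
  assumes "n \<ge> 2" and "l \<in> {1..n}" and "m \<in> {1..n}"
    and "usum n x \<noteq> 0" and "i \<in> {1..n}"
  shows "lie_bracket n (hlv n ladder_coeff) (Ysym n l m) x i = 0"
proof -
  note l = assms(2) and mm = assms(3) and u0 = assms(4) and ii = assms(5)
  define u where "u = usum n x"
  define S where "S = (\<Sum>j'=1..n. of_nat j' * (x j' :: complex))"
  define p where "p = int l - int m - 1"
  define q where "q = u powi p"
  define r where "r = u powi (p - 1)"
  define e where "e = (\<lambda>k. x k - (if k = l then u else 0))"
  define X where "X = (\<lambda>k. x k * ((1 + of_nat k) * u - S))"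
  define Li where "Li = (1 + of_nat i) * u - S"
  have hX: "hlv n ladder_coeff x k = X k" for k
    unfolding hlv_def X_def ladder_L u_def S_def ..
  have hY: "Ysym n l m x k = x m * q * e k" for k
    unfolding Ysym_def q_def e_def u_def p_def ..
  have qr: "q = u * r"
    unfolding q_def r_def using u0 u_def by (metis diff_add_cancel power_int_add_1')
  have summand: "hlv n ladder_coeff x k * pdiff (\<lambda>y. Ysym n l m y i) k x
      - Ysym n l m x k * pdiff (\<lambda>y. hlv n ladder_coeff y i) k x =
     (if k = m then X m * q * e i else 0) + X k * (x m * of_int p * r * e i)
     + (if k = i then X i * x m * q else 0) - X k * (x m * q * (if i = l then 1 else 0))
     - (if k = i then x m * q * e i * Li else 0) - (x m * q * e k) * (x i * (1 + of_nat i))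
     + (of_nat k * e k) * (x m * q * x i)"
    if k: "k \<in> {1..n}" for k
  proof -
    have lc: "ladder_coeff i k = 1 + of_nat i - of_nat k"
      by (simp add: ladder_coeff_def)
    have PX: "pdiff (\<lambda>y. hlv n ladder_coeff y i) k x = (if i = k then Li else 0) + x i * (1 + of_nat i - of_nat k)"
      unfolding pdiff_X[OF k] ladder_L lc Li_def u_def S_def ..
    have PY: "pdiff (\<lambda>y. Ysym n l m y i) k x = (if m = k then 1 else 0) * q * e i
       + x m * (of_int p * r) * e i + x m * q * ((if i = k then 1 else 0) - (if i = l then 1 else 0))"
      unfolding pdiff_Y[OF k u0] q_def r_def p_def e_def u_def ..
    show ?thesis
      unfolding PX PY hX hY
      by (cases "k = m"; cases "k = i"; cases "i = l") (simp_all add: algebra_simps)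
  qed
  have sX: "(\<Sum>k=1..n. X k) = u^2"
    using sum_X[of n x] by (simp add: hX u_def)
  have sE: "(\<Sum>k=1..n. e k) = 0"
    unfolding e_def u_def by (rule sum_e[OF l])
  have sKE: "(\<Sum>k=1..n. of_nat k * e k) = S - of_nat l * u"
    unfolding e_def u_def S_def by (rule sum_ke[OF l])
  have "lie_bracket n (hlv n ladder_coeff) (Ysym n l m) x i =
     (\<Sum>k=1..n. (if k = m then X m * q * e i else 0) + X k * (x m * of_int p * r * e i)
     + (if k = i then X i * x m * q else 0) - X k * (x m * q * (if i = l then 1 else 0))
     - (if k = i then x m * q * e i * Li else 0) - (x m * q * e k) * (x i * (1 + of_nat i))
     + (of_nat k * e k) * (x m * q * x i))"
    unfolding lie_bracket_def by (rule sum.cong) (use summand in auto)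
  also have "\<dots> = X m * q * e i + u^2 * (x m * of_int p * r * e i) + X i * x m * q
      - u^2 * (x m * q * (if i = l then 1 else 0)) - x m * q * e i * Li
      - x m * q * 0 * (x i * (1 + of_nat i)) + (S - of_nat l * u) * (x m * q * x i)"
    using mm ii
    by (simp add: sum.distrib sum_subtractf sum_distrib_right[symmetric]
        sum_distrib_left[symmetric] sX[simplified] sKE[simplified] sE[simplified] mult.assoc[symmetric])
  also have "\<dots> = 0"
    unfolding X_def Li_def e_def qr p_def
    by (cases "i = l") (simp_all add: algebra_simps power2_eq_square of_int_diff)
  finally show ?thesis .
qed

end
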